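(* Let $X=\{X_t\}_{t\in\mathbb T^d}$ be a measurable stationary random field which is positively dependent (associated). Then $X$ is ergodic if and only if it is weakly mixing.
   Context: $\mathbb T\in\{\mathbb Z,\mathbb R\}$, $\lambda$ counting/Lebesgue measure, $B(T)=(-T,T]^d\cap\mathbb T^d$, $C(T)=(2T)^d$. Associated: for all $t_1,\dots,t_n$ and all coordinatewise non-decreasing $g_1,g_2$ for which the covariance is defined, $\mathrm{Cov}(g_1(X_{t_1},\dots,X_{t_n}),g_2(X_{t_1},\dots,X_{t_n}))\ge0$. With $X_t=X_0\circ\theta_t$, $\theta$ a measure-preserving $\mathbb T^d$-action on $(\Omega,\mathcal F,\mathbb P)$, $\sigma_X=\sigma(X_t)$: ergodic means $\frac1{C(T)}\int_{B(T)}\mathbb P(A\cap\theta_t(B))\lambda(dt)\to\mathbb P(A)\mathbb P(B)$ for all $A,B\in\sigma_X$; weakly mixing means $\frac1{C(T)}\int_{B(T)}|\mathbb P(A\cap\theta_t(B))-\mathbb P(A)\mathbb P(B)|\lambda(dt)\to0$ for all $A,B\in\sigma_X$ (equivalently, convergence $\mathbb P(A\cap\theta_{t_n}(B))\to\mathbb P(A)\mathbb P(B)$ along all sequences in some density-one set tending to infinity). *)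

theory Defs
  imports "HOL-Probability.Probability"
begin

definition mp_action :: "'a measure \<Rightarrow> ('t::monoid_add \<Rightarrow> 'a \<Rightarrow> 'a) \<Rightarrow> bool" where
  "mp_action M \<theta> \<longleftrightarrow>
     (\<forall>t. \<theta> t \<in> M \<rightarrow>\<^sub>M M \<and> distr M M (\<theta> t) = M) \<and>
     (\<forall>\<omega>\<in>space M. \<theta> 0 \<omega> = \<omega>) \<and>
     (\<forall>s t. \<forall>\<omega>\<in>space M. \<theta> (s + t) \<omega> = \<theta> s (\<theta> t \<omega>))"

definition field_of :: "('a \<Rightarrow> real) \<Rightarrow> ('t \<Rightarrow> 'a \<Rightarrow> 'a) \<Rightarrow> 't \<Rightarrow> 'a \<Rightarrow> real" where
  "field_of X0 \<theta> t \<omega> = X0 (\<theta> t \<omega>)"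

definition measurable_field :: "'t measure \<Rightarrow> 'a measure \<Rightarrow> ('t \<Rightarrow> 'a \<Rightarrow> real) \<Rightarrow> bool" where
  "measurable_field L M X \<longleftrightarrow> (\<lambda>(t, \<omega>). X t \<omega>) \<in> borel_measurable (L \<Otimes>\<^sub>M M)"

definition sigmaX :: "'a measure \<Rightarrow> ('t \<Rightarrow> 'a \<Rightarrow> real) \<Rightarrow> 'a set set" where
  "sigmaX M X = sigma_sets (space M) {X t -` S \<inter> space M | t S. S \<in> sets borel}"

definition associated :: "'a measure \<Rightarrow> ('t \<Rightarrow> 'a \<Rightarrow> real) \<Rightarrow> bool" where
  "associated M X \<longleftrightarrow>
     (\<forall>(ts :: 't list) (g1 :: real list \<Rightarrow> real) (g2 :: real list \<Rightarrow> real).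
        (\<forall>xs ys. length xs = length ts \<longrightarrow> list_all2 (\<le>) xs ys \<longrightarrow>
              g1 xs \<le> g1 ys \<and> g2 xs \<le> g2 ys) \<and>
        integrable M (\<lambda>\<omega>. g1 (map (\<lambda>t. X t \<omega>) ts)) \<and>
        integrable M (\<lambda>\<omega>. g2 (map (\<lambda>t. X t \<omega>) ts)) \<and>
        integrable M (\<lambda>\<omega>. g1 (map (\<lambda>t. X t \<omega>) ts) * g2 (map (\<lambda>t. X t \<omega>) ts))
        \<longrightarrow>
        (\<integral>\<omega>. g1 (map (\<lambda>t. X t \<omega>) ts) * g2 (map (\<lambda>t. X t \<omega>) ts) \<partial>M)
          - (\<integral>\<omega>. g1 (map (\<lambda>t. X t \<omega>) ts) \<partial>M) * (\<integral>\<omega>. g2 (map (\<lambda>t. X t \<omega>) ts) \<partial>M) \<ge> 0)"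

text \<open>Ergodicity / weak mixing relative to an index measure L (counting or Lebesgue),
  boxes B(T) and normalisation C(T) = (2T)^d.\<close>
definition ergodic_field ::
  "'t measure \<Rightarrow> (real \<Rightarrow> 't set) \<Rightarrow> nat \<Rightarrow> 'a measure \<Rightarrow> ('t \<Rightarrow> 'a \<Rightarrow> 'a) \<Rightarrow> ('t \<Rightarrow> 'a \<Rightarrow> real) \<Rightarrow> bool" where
  "ergodic_field L B d M \<theta> X \<longleftrightarrow>
     (\<forall>A\<in>sigmaX M X. \<forall>E\<in>sigmaX M X.
        ((\<lambda>T. set_lebesgue_integral L (B T) (\<lambda>t. measure M (A \<inter> \<theta> t ` E)) / (2 * T) ^ d)
           \<longlongrightarrow> measure M A * measure M E) at_top)"

definition weakly_mixing_field ::
  "'t measure \<Rightarrow> (real \<Rightarrow> 't set) \<Rightarrow> nat \<Rightarrow> 'a measure \<Rightarrow> ('t \<Rightarrow> 'a \<Rightarrow> 'a) \<Rightarrow> ('t \<Rightarrow> 'a \<Rightarrow> real) \<Rightarrow> bool" where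
  "weakly_mixing_field L B d M \<theta> X \<longleftrightarrow>
     (\<forall>A\<in>sigmaX M X. \<forall>E\<in>sigmaX M X.
        ((\<lambda>T. set_lebesgue_integral L (B T)
                 (\<lambda>t. \<bar>measure M (A \<inter> \<theta> t ` E) - measure M A * measure M E\<bar>) / (2 * T) ^ d)
           \<longlongrightarrow> 0) at_top)"

definition boxZ :: "real \<Rightarrow> (int ^ 'n) set" where
  "boxZ T = {t. \<forall>i. - T < real_of_int (t $ i) \<and> real_of_int (t $ i) \<le> T}"

definition boxR :: "real \<Rightarrow> (real ^ 'n) set" where
  "boxR T = {t. \<forall>i. - T < t $ i \<and> t $ i \<le> T}"

end

theory Submission
  imports Defs
begin


locale mixsetup =
  fixes L :: "'t::ab_group_add measure" and B :: "real \<Rightarrow> 't set" and d :: nat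
    and M :: "'a measure" and \<theta> :: "'t \<Rightarrow> 'a \<Rightarrow> 'a" and X0 :: "'a \<Rightarrow> real"
  assumes P: "prob_space M" and X0m: "X0 \<in> borel_measurable M" and mp: "mp_action M \<theta>"
    and jm: "measurable_field L M (field_of X0 \<theta>)"
    and assoc: "associated M (field_of X0 \<theta>)"
    and spL: "space L = UNIV"
    and Bsets: "\<And>T. B T \<in> sets L" and Bfin: "\<And>T. emeasure L (B T) < \<infinity>"
    and Blim: "((\<lambda>T. measure L (B T) / (2*T)^d) \<longlongrightarrow> 1) at_top"
    and minus_meas: "\<And>s. (\<lambda>t. s - t) \<in> L \<rightarrow>\<^sub>M L"
begin

interpretation prob_space M by (rule P)

abbreviation "X \<equiv> field_of X0 \<theta>"
definition "pre t E = \<theta> (-t) -` E \<inter> space M"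

lemma th_meas: "\<theta> t \<in> M \<rightarrow>\<^sub>M M" and th_distr: "distr M M (\<theta> t) = M"
  using mp unfolding mp_action_def by auto

lemma th_sp: "\<omega> \<in> space M \<Longrightarrow> \<theta> t \<omega> \<in> space M"
  using measurable_space[OF th_meas] by blast

lemma th_add: "\<omega> \<in> space M \<Longrightarrow> \<theta> (s + t) \<omega> = \<theta> s (\<theta> t \<omega>)"
  using mp unfolding mp_action_def by auto

lemma th_0: "\<omega> \<in> space M \<Longrightarrow> \<theta> 0 \<omega> = \<omega>"
  using mp unfolding mp_action_def by auto

lemma th_inv1: "\<omega> \<in> space M \<Longrightarrow> \<theta> (-t) (\<theta> t \<omega>) = \<omega>"
  by (metis th_add th_0 add.left_inverse)

lemma th_inv2: "\<omega> \<in> space M \<Longrightarrow> \<theta> t (\<theta> (-t) \<omega>) = \<omega>"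
  by (metis th_add th_0 add.right_inverse)

lemma img_pre: "E \<subseteq> space M \<Longrightarrow> \<theta> t ` E = pre t E"
  unfolding pre_def
proof (intro equalityI subsetI)
  fix x assume "E \<subseteq> space M" "x \<in> \<theta> t ` E"
  then obtain e where "e \<in> E" "x = \<theta> t e" by auto
  then show "x \<in> \<theta> (- t) -` E \<inter> space M" using \<open>E \<subseteq> space M\<close> th_sp th_inv1 by auto
next
  fix \<omega> assume "\<omega> \<in> \<theta> (- t) -` E \<inter> space M"
  then show "\<omega> \<in> \<theta> t ` E" using th_inv2[of \<omega> t] by (metis IntD1 IntD2 image_eqI vimageE)
qed

lemma pre_sets: "E \<in> sets M \<Longrightarrow> pre t E \<in> sets M"
  unfolding pre_def using th_meas by (rule measurable_sets)

lemma pre_prob: "E \<in> sets M \<Longrightarrow> prob (pre t E) = prob E"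
  unfolding pre_def using measure_distr[OF th_meas, of E "-t"] th_distr[of "-t"] by simp

lemma X_shift: "\<omega> \<in> space M \<Longrightarrow> X s (\<theta> t \<omega>) = X (s + t) \<omega>"
  unfolding field_of_def by (simp add: th_add)

lemma X_meas: "X t \<in> borel_measurable M"
  unfolding field_of_def[abs_def] using X0m th_meas by measurable

lemma sigmaX_sets: "sigmaX M X \<subseteq> sets M"
  unfolding sigmaX_def
  by (rule sets.sigma_sets_subset) (auto intro!: measurable_sets[OF X_meas])

lemma sigmaX_sp: "E \<in> sigmaX M X \<Longrightarrow> E \<subseteq> space M"
  using sigmaX_sets sets.sets_into_space by blast

definition "Q E = {p \<in> space (L \<Otimes>\<^sub>M M). \<theta> (- fst p) (snd p) \<in> E}"

lemma Q_sets: "E \<in> sigmaX M X \<Longrightarrow> Q E \<in> sets (L \<Otimes>\<^sub>M M)"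
  unfolding sigmaX_def
proof (induction rule: sigma_sets.induct)
  case (Basic a)
  then obtain s S where a: "a = X s -` S \<inter> space M" "S \<in> sets borel" by auto
  have "Q a = (\<lambda>p. X (s - fst p) (snd p)) -` S \<inter> space (L \<Otimes>\<^sub>M M)"
    unfolding Q_def a using X_shift th_sp by (auto simp: space_pair_measure)
  also have "\<dots> \<in> sets (L \<Otimes>\<^sub>M M)"
  proof (rule measurable_sets[OF _ a(2)])
    have j: "(\<lambda>(t, \<omega>). X t \<omega>) \<in> borel_measurable (L \<Otimes>\<^sub>M M)"
      using jm unfolding measurable_field_def .
    have "(\<lambda>p. (s - fst p, snd p)) \<in> L \<Otimes>\<^sub>M M \<rightarrow>\<^sub>M L \<Otimes>\<^sub>M M"
      using minus_meas[of s] by measurable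
    from measurable_comp[OF this j]
    show "(\<lambda>p. X (s - fst p) (snd p)) \<in> borel_measurable (L \<Otimes>\<^sub>M M)"
      by (simp add: o_def)
  qed
  finally show ?case .
next
  case Empty
  then show ?case by (simp add: Q_def)
next
  case (Compl a)
  have "Q (space M - a) = space (L \<Otimes>\<^sub>M M) - Q a"
    unfolding Q_def using th_sp by (auto simp: space_pair_measure)
  then show ?case using Compl by auto
next
  case (Union a)
  have "Q (\<Union>i. a i) = (\<Union>i. Q (a i))" unfolding Q_def by auto
  then show ?case using Union by auto
qed

lemma pre_meas: "A \<in> sets M \<Longrightarrow> E \<in> sigmaX M X \<Longrightarrow> (\<lambda>t. prob (A \<inter> pre t E)) \<in> borel_measurable L"
proof -
  assume A: "A \<in> sets M" and E: "E \<in> sigmaX M X"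
  have QA: "Q E \<inter> (space L \<times> A) \<in> sets (L \<Otimes>\<^sub>M M)"
    using Q_sets[OF E] A by auto
  have eq: "Pair t -` (Q E \<inter> (space L \<times> A)) = A \<inter> pre t E" for t
    unfolding Q_def pre_def using sets.sets_into_space[OF A] spL by (auto simp: space_pair_measure)
  have "(\<lambda>t. emeasure M (Pair t -` (Q E \<inter> (space L \<times> A)))) \<in> borel_measurable L"
    by (rule measurable_emeasure_Pair[OF QA])
  then have "(\<lambda>t. enn2real (emeasure M (A \<inter> pre t E))) \<in> borel_measurable L"
    unfolding eq by measurable
  then show ?thesis by (simp add: measure_def)
qed

definition "avg \<phi> T = set_lebesgue_integral L (B T) \<phi> / (2*T)^d"
definition "cT T = measure L (B T) / (2*T)^d"
definition "Null \<phi> \<longleftrightarrow> \<phi> \<in> borel_measurable L \<and> (\<exists>C. \<forall>t. \<bar>\<phi> t\<bar> \<le> C) \<and>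
   ((\<lambda>T. avg (\<lambda>t. \<bar>\<phi> t\<bar>) T) \<longlongrightarrow> 0) at_top"

lemma si_const: "set_integrable L (B T) (\<lambda>_. C::real)"
  unfolding set_integrable_def
  using integrable_real_indicator[OF Bsets Bfin, of T]
  by (simp add: integrable_mult_left)

lemma si_int: "\<phi> \<in> borel_measurable L \<Longrightarrow> \<forall>t. \<bar>\<phi> t\<bar> \<le> C \<Longrightarrow> set_integrable L (B T) (\<phi>::'t\<Rightarrow>real)"
  apply (rule set_integrable_bound[OF si_const[of T C]])
  unfolding set_borel_measurable_def apply measurable
  using Bsets apply simp
  by (auto intro!: AE_I2 simp: abs_le_iff) (meson abs_ge_self order_trans)+

lemma si_int': "\<phi> \<in> borel_measurable L \<Longrightarrow> \<exists>C. \<forall>t. \<bar>\<phi> t\<bar> \<le> C \<Longrightarrow> set_integrable L (B T) (\<phi>::'t\<Rightarrow>real)"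
  using si_int by blast

lemma sint_const: "set_lebesgue_integral L (B T) (\<lambda>_. C::real) = measure L (B T) * C"
  using set_integral_const[OF Bsets, of T C] Bfin[of T] by simp

lemma avg_nonneg: "T > 0 \<Longrightarrow> \<phi> \<in> borel_measurable L \<Longrightarrow> \<forall>t. \<bar>\<phi> t\<bar> \<le> C \<Longrightarrow> (\<forall>t. \<phi> t \<ge> 0) \<Longrightarrow> avg \<phi> T \<ge> 0"
proof -
  assume a: "T > 0" "\<phi> \<in> borel_measurable L" "\<forall>t. \<bar>\<phi> t\<bar> \<le> C" "\<forall>t. \<phi> t \<ge> 0"
  have "set_lebesgue_integral L (B T) (\<lambda>_. 0::real) \<le> set_lebesgue_integral L (B T) \<phi>"
    by (rule set_integral_mono[OF si_const si_int[OF a(2,3)]]) (use a in auto)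
  then show ?thesis unfolding avg_def using a(1) by (simp add: sint_const)
qed

lemma avg_mono: "T > 0 \<Longrightarrow> \<phi> \<in> borel_measurable L \<Longrightarrow> \<forall>t. \<bar>\<phi> t\<bar> \<le> C \<Longrightarrow>
   \<psi> \<in> borel_measurable L \<Longrightarrow> \<forall>t. \<bar>\<psi> t\<bar> \<le> C' \<Longrightarrow> (\<forall>t. \<phi> t \<le> \<psi> t) \<Longrightarrow> avg \<phi> T \<le> avg \<psi> T"
proof -
  assume a: "T > 0" "\<phi> \<in> borel_measurable L" "\<forall>t. \<bar>\<phi> t\<bar> \<le> C"
   "\<psi> \<in> borel_measurable L" "\<forall>t. \<bar>\<psi> t\<bar> \<le> C'" "\<forall>t. \<phi> t \<le> \<psi> t"
  have "set_lebesgue_integral L (B T) \<phi> \<le> set_lebesgue_integral L (B T) \<psi>"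
    by (rule set_integral_mono[OF si_int[OF a(2,3)] si_int[OF a(4,5)]]) (use a in auto)
  then show ?thesis unfolding avg_def using a(1) by (simp add: divide_right_mono)
qed

lemma avg_add: "\<phi> \<in> borel_measurable L \<Longrightarrow> \<forall>t. \<bar>\<phi> t\<bar> \<le> C \<Longrightarrow>
   \<psi> \<in> borel_measurable L \<Longrightarrow> \<forall>t. \<bar>\<psi> t\<bar> \<le> C' \<Longrightarrow> avg (\<lambda>t. \<phi> t + \<psi> t) T = avg \<phi> T + avg \<psi> T"
proof -
  assume a: "\<phi> \<in> borel_measurable L" "\<forall>t. \<bar>\<phi> t\<bar> \<le> C"
   "\<psi> \<in> borel_measurable L" "\<forall>t. \<bar>\<psi> t\<bar> \<le> C'"
  show ?thesis unfolding avg_def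
    using set_integral_add(2)[OF si_int[OF a(1,2)] si_int[OF a(3,4)]] by (simp add: add_divide_distrib)
qed

lemma avg_diff: "\<phi> \<in> borel_measurable L \<Longrightarrow> \<forall>t. \<bar>\<phi> t\<bar> \<le> C \<Longrightarrow>
   \<psi> \<in> borel_measurable L \<Longrightarrow> \<forall>t. \<bar>\<psi> t\<bar> \<le> C' \<Longrightarrow> avg (\<lambda>t. \<phi> t - \<psi> t) T = avg \<phi> T - avg \<psi> T"
proof -
  assume a: "\<phi> \<in> borel_measurable L" "\<forall>t. \<bar>\<phi> t\<bar> \<le> C"
   "\<psi> \<in> borel_measurable L" "\<forall>t. \<bar>\<psi> t\<bar> \<le> C'"
  show ?thesis unfolding avg_def
    using set_integral_diff(2)[OF si_int[OF a(1,2)] si_int[OF a(3,4)]] by (simp add: diff_divide_distrib)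
qed

lemma avg_const: "avg (\<lambda>_. c) T = c * cT T"
  unfolding avg_def cT_def by (simp add: sint_const)

lemma avg_abs: "T > 0 \<Longrightarrow> \<phi> \<in> borel_measurable L \<Longrightarrow> \<forall>t. \<bar>\<phi> t\<bar> \<le> C \<Longrightarrow> \<bar>avg \<phi> T\<bar> \<le> avg (\<lambda>t. \<bar>\<phi> t\<bar>) T"
proof -
  assume T: "T > 0" and m: "\<phi> \<in> borel_measurable L" and b: "\<forall>t. \<bar>\<phi> t\<bar> \<le> C"
  have b2: "\<forall>t. \<bar>\<bar>\<phi> t\<bar>\<bar> \<le> C" "\<forall>t. \<bar>- \<phi> t\<bar> \<le> C" using b by auto
  have "avg \<phi> T \<le> avg (\<lambda>t. \<bar>\<phi> t\<bar>) T"
    by (rule avg_mono[OF T m b _ b2(1)]) (use m in auto)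
  moreover have "avg (\<lambda>t. - \<phi> t) T \<le> avg (\<lambda>t. \<bar>\<phi> t\<bar>) T"
    by (rule avg_mono[OF T _ b2(2) _ b2(1)]) (use m in auto)
  moreover have "avg (\<lambda>t. - \<phi> t) T = - avg \<phi> T"
    using avg_diff[of "\<lambda>_. 0" 0 \<phi> C T] m b by (simp add: avg_const)
  ultimately show ?thesis by linarith
qed

lemma ev_pos: "eventually (\<lambda>T::real. T > 0) at_top"
  by (rule eventually_gt_at_top)

lemma Null_bound:
  assumes "Null \<psi>" "\<phi> \<in> borel_measurable L" "\<And>t. \<bar>\<phi> t\<bar> \<le> \<bar>\<psi> t\<bar>"
  shows "Null \<phi>"
proof -
  obtain C where C: "\<forall>t. \<bar>\<psi> t\<bar> \<le> C" and m: "\<psi> \<in> borel_measurable L"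
     and l: "((\<lambda>T. avg (\<lambda>t. \<bar>\<psi> t\<bar>) T) \<longlongrightarrow> 0) at_top"
    using assms(1) unfolding Null_def by auto
  have Cp: "\<forall>t. \<bar>\<phi> t\<bar> \<le> C" using C assms(3) order_trans by blast
  have "((\<lambda>T. avg (\<lambda>t. \<bar>\<phi> t\<bar>) T) \<longlongrightarrow> 0) at_top"
  proof (rule tendsto_0_le[OF l, of _ 1])
    show "\<forall>\<^sub>F x in at_top. norm (avg (\<lambda>t. \<bar>\<phi> t\<bar>) x) \<le> norm (avg (\<lambda>t. \<bar>\<psi> t\<bar>) x) * 1"
      using ev_pos
    proof eventually_elim
      case (elim T)
      have "0 \<le> avg (\<lambda>t. \<bar>\<phi> t\<bar>) T"
        by (rule avg_nonneg[OF elim, of _ C]) (use assms(2) Cp in auto)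
      moreover have "avg (\<lambda>t. \<bar>\<phi> t\<bar>) T \<le> avg (\<lambda>t. \<bar>\<psi> t\<bar>) T"
        by (rule avg_mono[OF elim, of _ C _ C]) (use assms(2,3) Cp C m in auto)
      ultimately show ?case by simp
    qed
  qed
  then show ?thesis unfolding Null_def using assms(2) Cp by auto
qed

lemma Null_add:
  assumes "Null \<phi>" "Null \<psi>"
  shows "Null (\<lambda>t. \<phi> t + \<psi> t)"
proof -
  obtain C where C: "\<forall>t. \<bar>\<phi> t\<bar> \<le> C" and m: "\<phi> \<in> borel_measurable L"
     and l: "((\<lambda>T. avg (\<lambda>t. \<bar>\<phi> t\<bar>) T) \<longlongrightarrow> 0) at_top"
    using assms(1) unfolding Null_def by auto
  obtain C' where C': "\<forall>t. \<bar>\<psi> t\<bar> \<le> C'" and m': "\<psi> \<in> borel_measurable L"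
     and l': "((\<lambda>T. avg (\<lambda>t. \<bar>\<psi> t\<bar>) T) \<longlongrightarrow> 0) at_top"
    using assms(2) unfolding Null_def by auto
  have CC: "\<forall>t. \<bar>\<phi> t + \<psi> t\<bar> \<le> C + C'" using C C' by (meson abs_triangle_ineq add_mono order_trans)
  have "((\<lambda>T. avg (\<lambda>t. \<bar>\<phi> t + \<psi> t\<bar>) T) \<longlongrightarrow> 0) at_top"
  proof (rule tendsto_0_le[OF tendsto_add_zero[OF l l'], of _ 1])
    show "\<forall>\<^sub>F x in at_top. norm (avg (\<lambda>t. \<bar>\<phi> t + \<psi> t\<bar>) x) \<le> norm (avg (\<lambda>t. \<bar>\<phi> t\<bar>) x + avg (\<lambda>t. \<bar>\<psi> t\<bar>) x) * 1"
      using ev_pos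
    proof eventually_elim
      case (elim T)
      have "0 \<le> avg (\<lambda>t. \<bar>\<phi> t + \<psi> t\<bar>) T"
        by (rule avg_nonneg[OF elim, of _ "C + C'"]) (use m m' CC in auto)
      moreover have "avg (\<lambda>t. \<bar>\<phi> t + \<psi> t\<bar>) T \<le> avg (\<lambda>t. \<bar>\<phi> t\<bar> + \<bar>\<psi> t\<bar>) T"
        by (rule avg_mono[OF elim, of _ "C + C'" _ "C + C'"]) (use m m' CC C C' in \<open>auto simp: abs_triangle_ineq intro: add_mono\<close>)
      moreover have "avg (\<lambda>t. \<bar>\<phi> t\<bar> + \<bar>\<psi> t\<bar>) T = avg (\<lambda>t. \<bar>\<phi> t\<bar>) T + avg (\<lambda>t. \<bar>\<psi> t\<bar>) T"
        by (rule avg_add[of _ C _ C']) (use m m' C C' in auto)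
      ultimately show ?case by simp
    qed
  qed
  then show ?thesis unfolding Null_def using m m' CC by auto
qed

lemma cT_lim: "(cT \<longlongrightarrow> 1) at_top"
  using Blim unfolding cT_def[abs_def] .

lemma Null_approx:
  assumes m: "\<phi> \<in> borel_measurable L" and C: "\<forall>t. \<bar>\<phi> t\<bar> \<le> C"
    and ap: "\<And>e. e > 0 \<Longrightarrow> \<exists>\<psi>. Null \<psi> \<and> (\<forall>t. \<bar>\<phi> t - \<psi> t\<bar> \<le> e)"
  shows "Null \<phi>"
proof -
  have "((\<lambda>T. avg (\<lambda>t. \<bar>\<phi> t\<bar>) T) \<longlongrightarrow> 0) at_top"
  proof (rule tendstoI)
    fix e :: real assume e: "e > 0"
    obtain \<psi> where N: "Null \<psi>" and ps: "\<forall>t. \<bar>\<phi> t - \<psi> t\<bar> \<le> e/4"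
      using ap[of "e/4"] e by auto
    obtain C' where C': "\<forall>t. \<bar>\<psi> t\<bar> \<le> C'" and m': "\<psi> \<in> borel_measurable L"
       and l': "((\<lambda>T. avg (\<lambda>t. \<bar>\<psi> t\<bar>) T) \<longlongrightarrow> 0) at_top"
      using N unfolding Null_def by auto
    have ev1: "eventually (\<lambda>T. dist (avg (\<lambda>t. \<bar>\<psi> t\<bar>) T) 0 < e/2) at_top"
      using tendstoD[OF l', of "e/2"] e by auto
    have ev2: "eventually (\<lambda>T. cT T < 2) at_top"
      using order_tendstoD(2)[OF cT_lim, of 2] by simp
    show "eventually (\<lambda>T. dist (avg (\<lambda>t. \<bar>\<phi> t\<bar>) T) 0 < e) at_top"
      using ev1 ev2 ev_pos
    proof eventually_elim
      case (elim T)
      have b1: "\<forall>t. \<bar>\<bar>\<psi> t\<bar> + e/4\<bar> \<le> C' + e/4" using C' e by auto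
      have ptw: "\<bar>\<phi> t\<bar> \<le> \<bar>\<psi> t\<bar> + e/4" for t
        using ps[rule_format, of t] abs_triangle_ineq[of "\<phi> t - \<psi> t" "\<psi> t"] by simp
      have "0 \<le> avg (\<lambda>t. \<bar>\<phi> t\<bar>) T"
        by (rule avg_nonneg[OF elim(3), of _ C]) (use m C in auto)
      moreover have "avg (\<lambda>t. \<bar>\<phi> t\<bar>) T \<le> avg (\<lambda>t. \<bar>\<psi> t\<bar> + e/4) T"
        by (rule avg_mono[OF elim(3), of _ C _ "C' + e/4"]) (use m m' C b1 ptw in auto)
      moreover have "avg (\<lambda>t. \<bar>\<psi> t\<bar> + e/4) T = avg (\<lambda>t. \<bar>\<psi> t\<bar>) T + e/4 * cT T"
        using avg_add[of "\<lambda>t. \<bar>\<psi> t\<bar>" C' "\<lambda>_. e/4" "e/4" T] m' C' e by (simp add: avg_const)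
      moreover have "e/4 * cT T \<le> e/4 * 2" using elim(2) e by simp
      ultimately show ?case using elim(1) by simp
    qed
  qed
  then show ?thesis unfolding Null_def using m C by auto
qed

lemma Null_0: "Null (\<lambda>_. 0)"
proof -
  have "avg (\<lambda>t. 0) = (\<lambda>_. 0)" using avg_const[of 0] by (auto simp: fun_eq_iff)
  then show ?thesis unfolding Null_def by auto
qed

lemma Null_uminus: "Null \<phi> \<Longrightarrow> Null (\<lambda>t. - \<phi> t)"
  by (rule Null_bound) (auto simp: Null_def)

definition "h A C = prob (A \<inter> C) - prob A * prob C"

lemma h_comm: "h A C = h C A"
  unfolding h_def by (simp add: Int_commute mult.commute)

lemma h_add1: "A1 \<in> sets M \<Longrightarrow> A2 \<in> sets M \<Longrightarrow> C \<in> sets M \<Longrightarrow> A1 \<inter> A2 = {} \<Longrightarrow>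
   h (A1 \<union> A2) C = h A1 C + h A2 C"
proof -
  assume a: "A1 \<in> sets M" "A2 \<in> sets M" "C \<in> sets M" "A1 \<inter> A2 = {}"
  have "prob ((A1 \<union> A2) \<inter> C) = prob (A1 \<inter> C) + prob (A2 \<inter> C)"
    using finite_measure_Union[of "A1 \<inter> C" "A2 \<inter> C"] a by (auto simp: Int_Un_distrib2)
  moreover have "prob (A1 \<union> A2) = prob A1 + prob A2" using finite_measure_Union a by auto
  ultimately show ?thesis unfolding h_def by (simp add: algebra_simps)
qed

lemma h_compl1: "A \<in> sets M \<Longrightarrow> C \<in> sets M \<Longrightarrow> h (space M - A) C = - h A C"
proof -
  assume a: "A \<in> sets M" "C \<in> sets M"
  have "(space M - A) \<inter> C = C - A" using sets.sets_into_space[OF a(2)] by auto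
  then have e: "prob ((space M - A) \<inter> C) = prob C - prob (A \<inter> C)"
    using finite_measure_Diff'[OF a(2,1)] by (simp add: Int_commute)
  have c: "prob (space M - A) = 1 - prob A" using prob_compl[OF a(1)] .
  show ?thesis unfolding h_def e c by (simp add: algebra_simps)
qed

lemma h_approx1: "A \<in> sets M \<Longrightarrow> A' \<in> sets M \<Longrightarrow> C \<in> sets M \<Longrightarrow> A' \<subseteq> A \<Longrightarrow>
   \<bar>h A C - h A' C\<bar> \<le> 2 * prob (A - A')"
proof -
  assume a: "A \<in> sets M" "A' \<in> sets M" "C \<in> sets M" "A' \<subseteq> A"
  have d: "prob (A - A') = prob A - prob A'" using finite_measure_Diff a by auto
  have "prob ((A - A') \<inter> C) = prob (A \<inter> C) - prob (A' \<inter> C)"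
    using finite_measure_Diff[of "A \<inter> C" "A' \<inter> C"] a
    by (metis Int_Diff Int_mono order_refl Diff_Int_distrib2 sets.Int)
  then have hh: "h A C - h A' C = prob ((A - A') \<inter> C) - prob (A - A') * prob C"
    unfolding h_def d by (simp add: algebra_simps)
  have "prob ((A - A') \<inter> C) \<le> prob (A - A')"
    using a by (intro finite_measure_mono) auto
  moreover have "prob (A - A') * prob C \<le> prob (A - A')"
    using a by (simp add: mult_left_le)
  moreover have "0 \<le> prob (A - A') * prob C" by simp
  moreover have "0 \<le> prob ((A - A') \<inter> C)" by simp
  ultimately show ?thesis unfolding hh abs_le_iff by linarith
qed

lemma h_bound: "\<bar>h A C\<bar> \<le> 1"
proof -
  have "0 \<le> prob (A \<inter> C)" "prob (A \<inter> C) \<le> 1" "0 \<le> prob A * prob C" "prob A * prob C \<le> 1"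
    by (auto intro: mult_le_one)
  then show ?thesis unfolding h_def by linarith
qed

definition "g A E = (\<lambda>t. prob (A \<inter> pre t E) - prob A * prob E)"

lemma g_h: "E \<in> sets M \<Longrightarrow> g A E t = h A (pre t E)"
  unfolding g_def h_def using pre_prob by simp

lemma g_bound: "E \<in> sets M \<Longrightarrow> \<forall>t. \<bar>g A E t\<bar> \<le> 1"
  using g_h h_bound by simp

lemma g_meas: "A \<in> sets M \<Longrightarrow> E \<in> sigmaX M X \<Longrightarrow> g A E \<in> borel_measurable L"
  unfolding g_def by (intro borel_measurable_diff pre_meas borel_measurable_const)

lemma pre_compl: "E \<subseteq> space M \<Longrightarrow> pre t (space M - E) = space M - pre t E"
  unfolding pre_def using th_sp by auto

lemma pre_Un: "pre t (E1 \<union> E2) = pre t E1 \<union> pre t E2"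
  unfolding pre_def by auto

lemma pre_Int: "pre t (E1 \<inter> E2) = pre t E1 \<inter> pre t E2"
  unfolding pre_def by auto

lemma pre_Diff: "pre t (E1 - E2) = pre t E1 - pre t E2"
  unfolding pre_def by auto

lemma pre_UN: "pre t (\<Union>i. E i) = (\<Union>i. pre t (E i))"
  unfolding pre_def by auto

definition "Pset l = {\<omega> \<in> space M. \<forall>p \<in> set l. snd p < X (fst p) \<omega>}"
definition "Pis = range Pset"

lemma Pset_Int: "Pset l1 \<inter> Pset l2 = Pset (l1 @ l2)"
  unfolding Pset_def set_append ball_Un by blast

lemma Pis_Int_stable: "Int_stable Pis"
  unfolding Int_stable_def Pis_def
proof (intro ballI)
  fix a b assume "a \<in> range Pset" "b \<in> range Pset"
  then obtain l1 l2 where "a = Pset l1" "b = Pset l2" by auto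
  then show "a \<inter> b \<in> range Pset" using Pset_Int by auto
qed

lemma Pis_sub: "Pis \<subseteq> Pow (space M)"
  unfolding Pis_def Pset_def by auto

lemma sigmaX_sa: "sigma_algebra (space M) (sigmaX M X)"
  unfolding sigmaX_def by (rule sigma_algebra_sigma_sets) auto

lemma gen_sigmaX: "S \<in> sets borel \<Longrightarrow> X t -` S \<inter> space M \<in> sigmaX M X"
  unfolding sigmaX_def by (rule sigma_sets.Basic) auto

lemma Pset_sigmaX: "Pset l \<in> sigmaX M X"
proof (induction l)
  case Nil
  have "Pset [] = space M" unfolding Pset_def by simp
  then show ?case unfolding sigmaX_def using sigma_sets_top by simp
next
  case (Cons p l)
  have "Pset (p # l) = (X (fst p) -` {snd p<..} \<inter> space M) \<inter> Pset l"
    unfolding Pset_def by auto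
  moreover have "X (fst p) -` {snd p<..} \<inter> space M \<in> sigmaX M X"
    by (rule gen_sigmaX) simp
  ultimately show ?case using semiring_of_sets.Int[OF sigma_algebra.axioms(1)[OF sigmaX_sa, THEN algebra.axioms(1), THEN ring_of_sets.axioms(1)] _ Cons.IH] by simp
qed

lemma Pset_sets: "Pset l \<in> sets M"
  using Pset_sigmaX sigmaX_sets by auto

lemma sigma_eq: "sigma_sets (space M) Pis = sigmaX M X"
proof
  show "sigma_sets (space M) Pis \<subseteq> sigmaX M X"
    by (rule sigma_algebra.sigma_sets_subset[OF sigmaX_sa]) (use Pset_sigmaX in \<open>auto simp: Pis_def\<close>)
next
  let ?S = "sigma (space M) Pis"
  have sp: "space ?S = space M" and st: "sets ?S = sigma_sets (space M) Pis"
    using Pis_sub by auto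
  have "X s \<in> measurable ?S (sigma UNIV (range greaterThan))" for s
  proof (rule measurable_measure_of)
    show "X s \<in> space ?S \<rightarrow> UNIV" by auto
    fix y assume "y \<in> range (greaterThan :: real \<Rightarrow> real set)"
    then obtain a where y: "y = {a<..}" by auto
    have "X s -` y \<inter> space ?S = Pset [(s, a)]" unfolding y sp Pset_def by auto
    moreover have "Pset [(s, a)] \<in> sigma_sets (space M) Pis"
      unfolding Pis_def by (rule sigma_sets.Basic) simp
    ultimately show "X s -` y \<inter> space ?S \<in> sets ?S" using st by simp
  qed auto
  then have meas: "X s \<in> borel_measurable ?S" for s
    unfolding borel_Ioi by simp
  show "sigmaX M X \<subseteq> sigma_sets (space M) Pis"
    unfolding sigmaX_def
  proof (rule sigma_algebra.sigma_sets_subset)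
    show "sigma_algebra (space M) (sigma_sets (space M) Pis)"
      using Pis_sub by (rule sigma_algebra_sigma_sets)
    show "{X t -` S \<inter> space M |t S. S \<in> sets borel} \<subseteq> sigma_sets (space M) Pis"
    proof (rule subsetI)
      fix x assume "x \<in> {X t -` S \<inter> space M |t S. S \<in> sets borel}"
      then obtain t S where x: "x = X t -` S \<inter> space M" "S \<in> sets borel" by blast
      show "x \<in> sigma_sets (space M) Pis"
        using measurable_sets[OF meas x(2), of t] unfolding sp st x(1) .
    qed
  qed
qed

lemma pre_Pset: "pre t (Pset l) = Pset (map (\<lambda>p. (fst p - t, snd p)) l)"
proof -
  have "\<theta> (- t) \<omega> \<in> space M \<and> X s (\<theta> (- t) \<omega>) = X (s - t) \<omega>" if "\<omega> \<in> space M" for \<omega> s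
    using th_sp[OF that] X_shift[OF that] by simp
  then show ?thesis unfolding pre_def Pset_def by auto
qed


lemma assoc_Pset: "prob (Pset l1) * prob (Pset l2) \<le> prob (Pset l1 \<inter> Pset l2)"
proof -
  let ?ts = "map fst l1 @ map fst l2"
  define g1 where "g1 = (\<lambda>xs::real list. if list_all2 (<) (map snd l1) (take (length l1) xs) then 1 else (0::real))"
  define g2 where "g2 = (\<lambda>xs::real list. if list_all2 (<) (map snd l2) (drop (length l1) xs) then 1 else (0::real))"
  have tr: "list_all2 (<) as xs \<Longrightarrow> list_all2 (\<le>) xs ys \<Longrightarrow> list_all2 (<) as ys" for as xs ys :: "real list"
    by (rule list_all2_trans[of "(<)" "(\<le>)" "(<)"]) auto
  have mono: "\<forall>xs ys. length xs = length ?ts \<longrightarrow> list_all2 (\<le>) xs ys \<longrightarrow> g1 xs \<le> g1 ys \<and> g2 xs \<le> g2 ys"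
  proof (intro allI impI conjI)
    fix xs ys :: "real list" assume "list_all2 (\<le>) xs ys"
    then have a: "list_all2 (\<le>) (take (length l1) xs) (take (length l1) ys)"
      "list_all2 (\<le>) (drop (length l1) xs) (drop (length l1) ys)"
      by (auto intro: list_all2_takeI list_all2_dropI)
    show "g1 xs \<le> g1 ys" unfolding g1_def using tr[OF _ a(1)] by auto
    show "g2 xs \<le> g2 ys" unfolding g2_def using tr[OF _ a(2)] by auto
  qed
  have la: "list_all2 (<) (map snd l) (map (\<lambda>t. X t \<omega>) (map fst l)) \<longleftrightarrow> (\<forall>p\<in>set l. snd p < X (fst p) \<omega>)" for l \<omega>
    by (simp add: list_all2_map1 list_all2_map2 list_all2_same)
  have e1: "g1 (map (\<lambda>t. X t \<omega>) ?ts) = indicator (Pset l1) \<omega>" if "\<omega> \<in> space M" for \<omega>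
  proof -
    have "take (length l1) (map (\<lambda>t. X t \<omega>) ?ts) = map (\<lambda>t. X t \<omega>) (map fst l1)" by simp
    then show ?thesis using that unfolding g1_def Pset_def indicator_def by (simp only: la) simp
  qed
  have e2: "g2 (map (\<lambda>t. X t \<omega>) ?ts) = indicator (Pset l2) \<omega>" if "\<omega> \<in> space M" for \<omega>
  proof -
    have "drop (length l1) (map (\<lambda>t. X t \<omega>) ?ts) = map (\<lambda>t. X t \<omega>) (map fst l2)" by simp
    then show ?thesis using that unfolding g2_def Pset_def indicator_def by (simp only: la) simp
  qed
  have e12: "g1 (map (\<lambda>t. X t \<omega>) ?ts) * g2 (map (\<lambda>t. X t \<omega>) ?ts) = indicator (Pset l1 \<inter> Pset l2) \<omega>"
    if "\<omega> \<in> space M" for \<omega>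
    using e1[OF that] e2[OF that] by (simp split: split_indicator)
  have i: "integrable M (indicator S :: 'a \<Rightarrow> real)" if "S \<in> sets M" for S
    using that by (intro integrable_real_indicator) (auto simp: less_top[symmetric])
  have int1: "integrable M (\<lambda>\<omega>. g1 (map (\<lambda>t. X t \<omega>) ?ts))"
    using i[OF Pset_sets[of l1]] by (subst Bochner_Integration.integrable_cong[OF refl e1]) auto
  have int2: "integrable M (\<lambda>\<omega>. g2 (map (\<lambda>t. X t \<omega>) ?ts))"
    using i[OF Pset_sets[of l2]] by (subst Bochner_Integration.integrable_cong[OF refl e2]) auto
  have int12: "integrable M (\<lambda>\<omega>. g1 (map (\<lambda>t. X t \<omega>) ?ts) * g2 (map (\<lambda>t. X t \<omega>) ?ts))"
    using i[of "Pset l1 \<inter> Pset l2"] Pset_sets by (subst Bochner_Integration.integrable_cong[OF refl e12]) auto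
  have "(\<integral>\<omega>. g1 (map (\<lambda>t. X t \<omega>) ?ts) * g2 (map (\<lambda>t. X t \<omega>) ?ts) \<partial>M)
          - (\<integral>\<omega>. g1 (map (\<lambda>t. X t \<omega>) ?ts) \<partial>M) * (\<integral>\<omega>. g2 (map (\<lambda>t. X t \<omega>) ?ts) \<partial>M) \<ge> 0"
    using assoc mono int1 int2 int12 unfolding associated_def by blast
  moreover have "(\<integral>\<omega>. g1 (map (\<lambda>t. X t \<omega>) ?ts) \<partial>M) = prob (Pset l1)"
    using Pset_sets by (subst Bochner_Integration.integral_cong[OF refl e1]) auto
  moreover have "(\<integral>\<omega>. g2 (map (\<lambda>t. X t \<omega>) ?ts) \<partial>M) = prob (Pset l2)"
    using Pset_sets by (subst Bochner_Integration.integral_cong[OF refl e2]) auto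
  moreover have "(\<integral>\<omega>. g1 (map (\<lambda>t. X t \<omega>) ?ts) * g2 (map (\<lambda>t. X t \<omega>) ?ts) \<partial>M) = prob (Pset l1 \<inter> Pset l2)"
    using Pset_sets by (subst Bochner_Integration.integral_cong[OF refl e12]) auto
  ultimately show ?thesis by simp
qed

lemma Null_union_gen:
  fixes F :: "'a set \<Rightarrow> 't \<Rightarrow> real" and A :: "nat \<Rightarrow> 'a set"
  assumes add: "\<And>U V. U \<in> sets M \<Longrightarrow> V \<in> sets M \<Longrightarrow> U \<inter> V = {} \<Longrightarrow> F (U \<union> V) = (\<lambda>t. F U t + F V t)"
    and emp: "F {} = (\<lambda>t. 0)"
    and apx: "\<And>U V t. U \<in> sets M \<Longrightarrow> V \<in> sets M \<Longrightarrow> V \<subseteq> U \<Longrightarrow> \<bar>F U t - F V t\<bar> \<le> 2 * prob (U - V)"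
    and meas: "F (\<Union>i. A i) \<in> borel_measurable L" and bnd: "\<forall>t. \<bar>F (\<Union>i. A i) t\<bar> \<le> 1"
    and disj: "disjoint_family A" and rng: "range A \<subseteq> sets M" and N: "\<And>i. Null (F (A i))"
  shows "Null (F (\<Union>i. A i))"
proof -
  define U where "U n = (\<Union>i\<in>{..<n}. A i)" for n
  have Us: "U n \<in> sets M" for n unfolding U_def using rng by auto
  have NU: "Null (F (U n))" for n
  proof (induction n)
    case 0
    then show ?case unfolding U_def using emp Null_0 by simp
  next
    case (Suc n)
    have "U (Suc n) = U n \<union> A n" unfolding U_def by (simp add: lessThan_Suc Un_commute)
    moreover have "U n \<inter> A n = {}"
    proof -
      have False if "i < n" "x \<in> A i" "x \<in> A n" for x i
        using disj[unfolded disjoint_family_on_def, rule_format, of i n] that by auto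
      then show ?thesis unfolding U_def by auto
    qed
    ultimately have "F (U (Suc n)) = (\<lambda>t. F (U n) t + F (A n) t)"
      using add[OF Us] rng by auto
    then show ?case using Null_add[OF Suc N] by simp
  qed
  have inc: "incseq U" unfolding U_def incseq_def
    by (intro allI impI UN_mono) auto
  have UU: "(\<Union>n. U n) = (\<Union>i. A i)" unfolding U_def by auto
  have lim: "(\<lambda>n. prob (U n)) \<longlonglongrightarrow> prob (\<Union>i. A i)"
    using finite_Lim_measure_incseq[of U] Us inc UU by auto
  have As: "(\<Union>i. A i) \<in> sets M" using rng by auto
  show ?thesis
  proof (rule Null_approx[OF meas bnd])
    fix e :: real assume e: "e > 0"
    obtain n where n: "dist (prob (U n)) (prob (\<Union>i. A i)) < e/2"
      using tendstoD[OF lim, of "e/2"] e eventually_sequentially by auto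
    have sub: "U n \<subseteq> (\<Union>i. A i)" unfolding U_def by auto
    have "prob ((\<Union>i. A i) - U n) = prob (\<Union>i. A i) - prob (U n)"
      using finite_measure_Diff[OF As Us sub] .
    then have "2 * prob ((\<Union>i. A i) - U n) \<le> e" using n unfolding dist_real_def by linarith
    then have "\<forall>t. \<bar>F (\<Union>i. A i) t - F (U n) t\<bar> \<le> e"
      using apx[OF As Us sub] order_trans by blast
    then show "\<exists>\<psi>. Null \<psi> \<and> (\<forall>t. \<bar>F (\<Union>i. A i) t - \<psi> t\<bar> \<le> e)"
      using NU by blast
  qed
qed

lemma g_nonneg_Pis: "0 \<le> g (Pset l1) (Pset l2) t"
proof -
  let ?l = "map (\<lambda>p. (fst p - t, snd p)) l2"
  have "prob (Pset l2) = prob (Pset ?l)" using pre_prob[OF Pset_sets, of t l2] pre_Pset by simp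
  then show ?thesis unfolding g_def pre_Pset using assoc_Pset[of l1 ?l] by simp
qed

lemma erg_Null:
  assumes H: "\<forall>A\<in>sigmaX M X. \<forall>E\<in>sigmaX M X. ((\<lambda>T. avg (g A E) T) \<longlongrightarrow> 0) at_top"
  shows "\<forall>A\<in>sigmaX M X. \<forall>E\<in>sigmaX M X. Null (g A E)"
proof -
  have step1: "Null (g A E)" if E: "E \<in> Pis" and A: "A \<in> sigmaX M X" for A E
  proof -
    have Es: "E \<in> sigmaX M X" using E Pset_sigmaX unfolding Pis_def by auto
    then have Em: "E \<in> sets M" using sigmaX_sets by auto
    have "A \<in> sigma_sets (space M) Pis" using A sigma_eq by simp
    then show ?thesis
    proof (rule sigma_sets_induct_disjoint[OF Pis_Int_stable Pis_sub])
      fix A assume basic: "A \<in> Pis"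
      have As: "A \<in> sigmaX M X" using basic Pset_sigmaX unfolding Pis_def by auto
      have nn: "(\<lambda>t. \<bar>g A E t\<bar>) = g A E"
        using basic E g_nonneg_Pis unfolding Pis_def by (auto simp: fun_eq_iff)
      show "Null (g A E)" unfolding Null_def nn
        using H As Es g_meas[OF _ Es] g_bound[OF Em] sigmaX_sets by blast
    next
      have "g {} E = (\<lambda>t. 0)" unfolding g_def by simp
      then show "Null (g {} E)" using Null_0 by simp
    next
      fix A assume compl: "A \<in> sigma_sets (space M) Pis" "Null (g A E)"
      then have "A \<in> sets M" using sigma_eq sigmaX_sets by auto
      then have "g (space M - A) E = (\<lambda>t. - g A E t)"
        using g_h[OF Em] h_compl1 pre_sets[OF Em] by auto
      then show "Null (g (space M - A) E)" using Null_uminus[OF compl(2)] by simp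
    next
      fix A :: "nat \<Rightarrow> 'a set"
      assume union: "disjoint_family A" "range A \<subseteq> sigma_sets (space M) Pis" "\<And>i. Null (g (A i) E)"
      have rng: "range A \<subseteq> sets M" using union(2) sigma_eq sigmaX_sets by auto
      show "Null (g (\<Union>i. A i) E)"
      proof (rule Null_union_gen[where F = "\<lambda>A. g A E", OF _ _ _ _ _ union(1) rng union(3)])
        show "g (U \<union> V) E = (\<lambda>t. g U E t + g V E t)" if "U \<in> sets M" "V \<in> sets M" "U \<inter> V = {}" for U V
          using that g_h[OF Em] h_add1 pre_sets[OF Em] by auto
        show "g {} E = (\<lambda>t. 0)" unfolding g_def by simp
        show "\<bar>g U E t - g V E t\<bar> \<le> 2 * prob (U - V)" if "U \<in> sets M" "V \<in> sets M" "V \<subseteq> U" for U V t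
          using that g_h[OF Em] h_approx1 pre_sets[OF Em] by auto
        show "g (\<Union>i. A i) E \<in> borel_measurable L" using rng by (intro g_meas[OF _ Es]) auto
        show "\<forall>t. \<bar>g (\<Union>i. A i) E t\<bar> \<le> 1" using g_bound[OF Em] by simp
      qed
    qed
  qed
  show ?thesis
  proof (intro ballI)
    fix A E assume A: "A \<in> sigmaX M X" and E: "E \<in> sigmaX M X"
    have Am: "A \<in> sets M" using A sigmaX_sets by auto
    have "E \<in> sigma_sets (space M) Pis" using E sigma_eq by simp
    then show "Null (g A E)"
    proof (rule sigma_sets_induct_disjoint[OF Pis_Int_stable Pis_sub])
      fix E assume "E \<in> Pis"
      then show "Null (g A E)" using step1 A by auto
    next
      have "g A {} = (\<lambda>t. 0)" unfolding g_def pre_def by simp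
      then show "Null (g A {})" using Null_0 by simp
    next
      fix E assume compl: "E \<in> sigma_sets (space M) Pis" "Null (g A E)"
      then have Em: "E \<in> sets M" using sigma_eq sigmaX_sets by auto
      have "g A (space M - E) t = - g A E t" for t
      proof -
        have "g A (space M - E) t = h (space M - pre t E) A"
          using g_h[of "space M - E" A t] Em pre_compl[OF sets.sets_into_space[OF Em]] h_comm by auto
        also have "\<dots> = - h (pre t E) A" using h_compl1 pre_sets Em Am by auto
        also have "\<dots> = - g A E t" using g_h Em h_comm by simp
        finally show ?thesis .
      qed
      then have "g A (space M - E) = (\<lambda>t. - g A E t)" by auto
      then show "Null (g A (space M - E))" using Null_uminus[OF compl(2)] by simp
    next
      fix E :: "nat \<Rightarrow> 'a set"
      assume union: "disjoint_family E" "range E \<subseteq> sigma_sets (space M) Pis" "\<And>i. Null (g A (E i))"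
      have rng: "range E \<subseteq> sets M" using union(2) sigma_eq sigmaX_sets by auto
      show "Null (g A (\<Union>i. E i))"
      proof (rule Null_union_gen[where F = "\<lambda>E. g A E", OF _ _ _ _ _ union(1) rng union(3)])
        show "g A (U \<union> V) = (\<lambda>t. g A U t + g A V t)" if "U \<in> sets M" "V \<in> sets M" "U \<inter> V = {}" for U V
        proof
          fix t
          have "pre t U \<inter> pre t V = {}" using that(3) pre_Int[of t U V] by (simp add: pre_def)
          then show "g A (U \<union> V) t = g A U t + g A V t"
            using that g_h h_comm h_add1[of "pre t U" "pre t V" A] pre_sets pre_Un Am by auto
        qed
        show "g A {} = (\<lambda>t. 0)" unfolding g_def pre_def by simp
        show "\<bar>g A U t - g A V t\<bar> \<le> 2 * prob (U - V)" if "U \<in> sets M" "V \<in> sets M" "V \<subseteq> U" for U V t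
        proof -
          have "pre t V \<subseteq> pre t U" using that(3) unfolding pre_def by auto
          then have "\<bar>h (pre t U) A - h (pre t V) A\<bar> \<le> 2 * prob (pre t U - pre t V)"
            using h_approx1 pre_sets that Am by auto
          also have "prob (pre t U - pre t V) = prob (U - V)"
            using pre_Diff pre_prob that by (metis sets.Diff)
          finally show ?thesis using g_h that h_comm by simp
        qed
        have "(\<Union>i. E i) \<in> sigmaX M X"
          using union(2) sigma_eq sigma_algebra.countable_UN[OF sigmaX_sa, of E UNIV] by auto
        then show "g A (\<Union>i. E i) \<in> borel_measurable L" by (intro g_meas[OF Am])
        show "\<forall>t. \<bar>g A (\<Union>i. E i) t\<bar> \<le> 1" using g_bound rng by auto
      qed
    qed
  qed
qed

lemma avg_m: "A \<in> sigmaX M X \<Longrightarrow> E \<in> sigmaX M X \<Longrightarrow>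
   set_lebesgue_integral L (B T) (\<lambda>t. measure M (A \<inter> \<theta> t ` E)) / (2 * T) ^ d
   = avg (g A E) T + prob A * prob E * cT T"
proof -
  assume A: "A \<in> sigmaX M X" and E: "E \<in> sigmaX M X"
  have Am: "A \<in> sets M" and Em: "E \<in> sets M" using A E sigmaX_sets by auto
  have "(\<lambda>t. measure M (A \<inter> \<theta> t ` E)) = (\<lambda>t. g A E t + prob A * prob E)"
    using img_pre[OF sigmaX_sp[OF E]] unfolding g_def by auto
  then have "set_lebesgue_integral L (B T) (\<lambda>t. measure M (A \<inter> \<theta> t ` E)) / (2 * T) ^ d
     = avg (\<lambda>t. g A E t + prob A * prob E) T" unfolding avg_def by simp
  also have "\<dots> = avg (g A E) T + avg (\<lambda>_. prob A * prob E) T"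
    by (rule avg_add[of _ 1 _ "prob A * prob E"]) (use g_meas[OF Am E] g_bound[OF Em] in auto)
  finally show ?thesis by (simp add: avg_const)
qed

lemma avg_wm: "A \<in> sigmaX M X \<Longrightarrow> E \<in> sigmaX M X \<Longrightarrow>
   set_lebesgue_integral L (B T) (\<lambda>t. \<bar>measure M (A \<inter> \<theta> t ` E) - measure M A * measure M E\<bar>) / (2 * T) ^ d
   = avg (\<lambda>t. \<bar>g A E t\<bar>) T"
proof -
  assume A: "A \<in> sigmaX M X" and E: "E \<in> sigmaX M X"
  have "(\<lambda>t. \<bar>measure M (A \<inter> \<theta> t ` E) - measure M A * measure M E\<bar>) = (\<lambda>t. \<bar>g A E t\<bar>)"
    using img_pre[OF sigmaX_sp[OF E]] unfolding g_def by auto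
  then show ?thesis unfolding avg_def by simp
qed

lemma main_equiv: "ergodic_field L B d M \<theta> X \<longleftrightarrow> weakly_mixing_field L B d M \<theta> X"
proof
  assume erg: "ergodic_field L B d M \<theta> X"
  have "\<forall>A\<in>sigmaX M X. \<forall>E\<in>sigmaX M X. ((\<lambda>T. avg (g A E) T) \<longlongrightarrow> 0) at_top"
  proof (intro ballI)
    fix A E assume A: "A \<in> sigmaX M X" and E: "E \<in> sigmaX M X"
    have l1: "((\<lambda>T. avg (g A E) T + prob A * prob E * cT T) \<longlongrightarrow> prob A * prob E) at_top"
    proof -
      have "((\<lambda>T. set_lebesgue_integral L (B T) (\<lambda>t. measure M (A \<inter> \<theta> t ` E)) / (2 * T) ^ d)
           \<longlongrightarrow> measure M A * measure M E) at_top"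
        using erg A E unfolding ergodic_field_def by blast
      then show ?thesis using avg_m[OF A E] by simp
    qed
    have l2: "((\<lambda>T. prob A * prob E * cT T) \<longlongrightarrow> prob A * prob E * 1) at_top"
      by (intro tendsto_mult cT_lim tendsto_const)
    have "((\<lambda>T. (avg (g A E) T + prob A * prob E * cT T) - prob A * prob E * cT T) \<longlongrightarrow> prob A * prob E - prob A * prob E * 1) at_top"
      by (rule tendsto_diff[OF l1 l2])
    then show "((\<lambda>T. avg (g A E) T) \<longlongrightarrow> 0) at_top" by simp
  qed
  from erg_Null[OF this] show "weakly_mixing_field L B d M \<theta> X"
    unfolding weakly_mixing_field_def Null_def using avg_wm by simp
next
  assume wm: "weakly_mixing_field L B d M \<theta> X"
  show "ergodic_field L B d M \<theta> X"
    unfolding ergodic_field_def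
  proof (intro ballI)
    fix A E assume A: "A \<in> sigmaX M X" and E: "E \<in> sigmaX M X"
    have Am: "A \<in> sets M" and Em: "E \<in> sets M" using A E sigmaX_sets by auto
    have l0: "((\<lambda>T. avg (\<lambda>t. \<bar>g A E t\<bar>) T) \<longlongrightarrow> 0) at_top"
    proof -
      have "((\<lambda>T. set_lebesgue_integral L (B T)
                 (\<lambda>t. \<bar>measure M (A \<inter> \<theta> t ` E) - measure M A * measure M E\<bar>) / (2 * T) ^ d)
           \<longlongrightarrow> 0) at_top"
        using wm A E unfolding weakly_mixing_field_def by blast
      then show ?thesis using avg_wm[OF A E] by simp
    qed
    have "((\<lambda>T. avg (g A E) T) \<longlongrightarrow> 0) at_top"
    proof (rule tendsto_0_le[OF l0, of _ 1])
      show "\<forall>\<^sub>F T in at_top. norm (avg (g A E) T) \<le> norm (avg (\<lambda>t. \<bar>g A E t\<bar>) T) * 1"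
        using ev_pos
      proof eventually_elim
        case (elim T)
        have "\<bar>avg (g A E) T\<bar> \<le> avg (\<lambda>t. \<bar>g A E t\<bar>) T"
          by (rule avg_abs[OF elim g_meas[OF Am E] g_bound[OF Em]])
        then show ?case by simp
      qed
    qed
    then have "((\<lambda>T. avg (g A E) T + prob A * prob E * cT T) \<longlongrightarrow> 0 + prob A * prob E * 1) at_top"
      by (intro tendsto_add tendsto_mult cT_lim tendsto_const)
    then show "((\<lambda>T. set_lebesgue_integral L (B T) (\<lambda>t. measure M (A \<inter> \<theta> t ` E)) / (2 * T) ^ d)
           \<longlongrightarrow> measure M A * measure M E) at_top"
      using avg_m[OF A E] by simp
  qed
qed

end


lemma boxR_sub: "box (\<chi> i. - T) (\<chi> i. T) \<subseteq> (boxR T :: (real^'n) set)"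
    "(boxR T :: (real^'n) set) \<subseteq> cbox (\<chi> i. - T) (\<chi> i. T)"
  unfolding boxR_def mem_box_cart by (auto simp: subset_eq mem_box_cart less_imp_le dest: spec)

lemma prodT: "(\<Prod>b\<in>(Basis :: (real^'n) set). ((\<chi> i. T) - (\<chi> i. - T)) \<bullet> b) = (2 * T) ^ CARD('n)"
proof -
  have "(\<Prod>b\<in>(Basis :: (real^'n) set). ((\<chi> i. T) - (\<chi> i. - T)) \<bullet> b) = (\<Prod>b\<in>(Basis :: (real^'n) set). 2 * T)"
    by (rule prod.cong) (auto simp: Basis_vec_def inner_axis)
  also have "\<dots> = (2*T) ^ DIM(real^'n)" by simp
  finally show ?thesis by simp
qed

lemma boxR_sets: "boxR T \<in> sets (lborel :: (real^'n) measure)"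
proof -
  have "boxR T = {x \<in> space (lborel :: (real^'n) measure). \<forall>i\<in>UNIV. - T < x $ i \<and> x $ i \<le> T}"
    unfolding boxR_def by auto
  also have "\<dots> \<in> sets lborel" by measurable
  finally show ?thesis .
qed

lemma boxR_emeasure: "T > 0 \<Longrightarrow> emeasure lborel (boxR T :: (real^'n) set) = ennreal ((2 * T) ^ CARD('n))"
proof -
  assume T: "T > 0"
  have le: "\<forall>b\<in>(Basis :: (real^'n) set). (\<chi> i. - T) \<bullet> b \<le> (\<chi> i. T) \<bullet> b"
    using T by (auto simp: Basis_vec_def inner_axis)
  have "emeasure lborel (box (\<chi> i. - T) (\<chi> i. T) :: (real^'n) set) \<le> emeasure lborel (boxR T :: (real^'n) set)"
    by (rule emeasure_mono[OF boxR_sub(1) boxR_sets])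
  moreover have "emeasure lborel (boxR T :: (real^'n) set) \<le> emeasure lborel (cbox (\<chi> i. - T) (\<chi> i. T) :: (real^'n) set)"
    by (rule emeasure_mono[OF boxR_sub(2)]) simp
  ultimately show ?thesis
    using le unfolding emeasure_lborel_box_eq emeasure_lborel_cbox_eq prodT by (simp add: le)
qed

lemma boxR_fin: "emeasure lborel (boxR T :: (real^'n) set) < \<infinity>"
proof -
  have "emeasure lborel (boxR T :: (real^'n) set) \<le> emeasure lborel (cbox (\<chi> i. - T) (\<chi> i. T) :: (real^'n) set)"
    by (rule emeasure_mono[OF boxR_sub(2)]) simp
  then show ?thesis using emeasure_lborel_cbox_finite[of "(\<chi> i. - T) :: real^'n" "\<chi> i. T"]
    by (meson order_le_less_trans)
qed

lemma boxR_lim: "((\<lambda>T. measure lborel (boxR T :: (real^'n) set) / (2*T)^CARD('n)) \<longlongrightarrow> 1) at_top"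
proof (rule tendsto_eventually)
  show "\<forall>\<^sub>F T in at_top. measure lborel (boxR T :: (real^'n) set) / (2*T)^CARD('n) = 1"
    using eventually_gt_at_top[of "0::real"]
  proof eventually_elim
    case (elim T)
    then show ?case using boxR_emeasure[OF elim, where 'n='n] by (simp add: measure_def)
  qed
qed

lemma minus_lborel: "(\<lambda>t. s - t) \<in> (lborel :: (real^'n) measure) \<rightarrow>\<^sub>M lborel"
  by measurable



definition "SZ T = {k::int. - T < real_of_int k \<and> real_of_int k \<le> T}"

lemma SZ_eq: "SZ T = {\<lfloor>-T\<rfloor> + 1 .. \<lfloor>T\<rfloor>}"
proof -
  have a: "\<lfloor>-T\<rfloor> + 1 \<le> x \<longleftrightarrow> - T < real_of_int x" for x
  proof -
    have "\<lfloor>-T\<rfloor> + 1 \<le> x \<longleftrightarrow> \<lfloor>-T\<rfloor> < x" by linarith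
    also have "\<dots> \<longleftrightarrow> - T < real_of_int x" by (simp add: floor_less_iff)
    finally show ?thesis .
  qed
  have b: "x \<le> \<lfloor>T\<rfloor> \<longleftrightarrow> real_of_int x \<le> T" for x by (simp add: le_floor_iff)
  show ?thesis unfolding SZ_def using a b by auto
qed

lemma SZ_fin: "finite (SZ T)" unfolding SZ_eq by simp

lemma boxZ_img: "(boxZ T :: (int^'n) set) = vec_lambda ` (PiE UNIV (\<lambda>_. SZ T))"
proof (intro equalityI subsetI)
  fix x :: "int^'n" assume "x \<in> boxZ T"
  then have "(\<lambda>i. x $ i) \<in> PiE UNIV (\<lambda>_. SZ T)" unfolding boxZ_def SZ_def by auto
  moreover have "x = vec_lambda (\<lambda>i. x $ i)" by simp
  ultimately show "x \<in> vec_lambda ` (PiE UNIV (\<lambda>_. SZ T))" by blast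
next
  fix x :: "int^'n" assume "x \<in> vec_lambda ` (PiE UNIV (\<lambda>_. SZ T))"
  then obtain f where "f \<in> PiE UNIV (\<lambda>_. SZ T)" "x = vec_lambda f" by auto
  then show "x \<in> boxZ T" unfolding boxZ_def SZ_def by auto
qed

lemma boxZ_card: "card (boxZ T :: (int^'n) set) = card (SZ T) ^ CARD('n)"
proof -
  have "inj_on (vec_lambda :: ('n \<Rightarrow> int) \<Rightarrow> int^'n) (PiE UNIV (\<lambda>_. SZ T))"
    by (rule inj_onI) (simp add: vec_lambda_inject)
  then have "card (boxZ T :: (int^'n) set) = card (PiE (UNIV :: 'n set) (\<lambda>_. SZ T))"
    unfolding boxZ_img by (rule card_image)
  also have "\<dots> = card (SZ T) ^ CARD('n)" by (simp add: card_PiE)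
  finally show ?thesis .
qed

lemma boxZ_fin: "finite (boxZ T :: (int^'n) set)"
  unfolding boxZ_img by (intro finite_imageI finite_PiE SZ_fin) auto

lemma SZ_card_bounds: "T \<ge> 0 \<Longrightarrow> 2*T - 1 \<le> real (card (SZ T)) \<and> real (card (SZ T)) \<le> 2*T + 1"
proof -
  assume T: "T \<ge> 0"
  have f1: "T - 1 < real_of_int \<lfloor>T\<rfloor>" "real_of_int \<lfloor>T\<rfloor> \<le> T"
    using real_of_int_floor_gt_diff_one[of T] of_int_floor_le[of T] by auto
  have f2: "- T - 1 < real_of_int \<lfloor>-T\<rfloor>" "real_of_int \<lfloor>-T\<rfloor> \<le> - T"
    using real_of_int_floor_gt_diff_one[of "-T"] of_int_floor_le[of "-T"] by auto
  have nn: "\<lfloor>T\<rfloor> - \<lfloor>-T\<rfloor> \<ge> 0"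
  proof -
    have ar: "\<And>a b::real. T - 1 < a \<Longrightarrow> - T - 1 < b \<Longrightarrow> b \<le> - T \<Longrightarrow> a - b > -1" using T by linarith
    have "real_of_int (\<lfloor>T\<rfloor> - \<lfloor>-T\<rfloor>) > -1" using ar[OF f1(1) f2] by simp
    then show ?thesis by simp
  qed
  have "card (SZ T) = nat (\<lfloor>T\<rfloor> - (\<lfloor>-T\<rfloor> + 1) + 1)"
    unfolding SZ_eq by (rule card_atLeastAtMost_int)
  then have "real (card (SZ T)) = real_of_int (\<lfloor>T\<rfloor> - \<lfloor>-T\<rfloor>)"
    using nn by simp
  moreover have ar: "\<And>a b::real. T - 1 < a \<Longrightarrow> a \<le> T \<Longrightarrow> - T - 1 < b \<Longrightarrow> b \<le> - T \<Longrightarrow>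
     2*T - 1 \<le> a - b \<and> a - b \<le> 2*T + 1" by linarith
  ultimately show ?thesis using ar[OF f1 f2] by simp
qed

lemma inv2T: "((\<lambda>T::real. 1 / (2*T)) \<longlongrightarrow> 0) at_top"
proof -
  have l: "((\<lambda>T::real. inverse T) \<longlongrightarrow> 0) at_top" by (rule tendsto_inverse_0_at_top[OF filterlim_ident])
  have l2: "((\<lambda>T. inverse 2 * inverse T) \<longlongrightarrow> inverse 2 * (0::real)) at_top"
    by (rule tendsto_mult[OF tendsto_const l])
  have eq: "(\<lambda>T::real. 1 / (2*T)) = (\<lambda>T. inverse 2 * inverse T)"
    by (rule ext) (simp only: divide_inverse mult_1 inverse_mult_distrib)
  show ?thesis unfolding eq using l2 by (simp only: mult_zero_right)
qed

lemma boxZ_lim: "((\<lambda>T. measure (count_space UNIV) (boxZ T :: (int^'n) set) / (2*T)^CARD('n)) \<longlongrightarrow> 1) at_top"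
proof -
  have r: "((\<lambda>T. real (card (SZ T)) / (2*T)) \<longlongrightarrow> 1) at_top"
  proof (rule tendsto_sandwich)
    show "((\<lambda>T::real. 1 - 1 / (2*T)) \<longlongrightarrow> 1) at_top" using tendsto_diff[OF tendsto_const inv2T, of 1] by simp
    show "((\<lambda>T::real. 1 + 1 / (2*T)) \<longlongrightarrow> 1) at_top" using tendsto_add[OF tendsto_const inv2T, of 1] by simp
    show "\<forall>\<^sub>F T::real in at_top. 1 - 1 / (2*T) \<le> real (card (SZ T)) / (2*T)"
      using eventually_gt_at_top[of "0::real"]
    proof eventually_elim
      case (elim T)
      have e: "1 - 1 / (2*T) = (2*T - 1) / (2*T)" using elim by (simp add: diff_divide_distrib)
      show ?case unfolding e using SZ_card_bounds[of T] elim by (intro divide_right_mono) auto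
    qed
    show "\<forall>\<^sub>F T::real in at_top. real (card (SZ T)) / (2*T) \<le> 1 + 1 / (2*T)"
      using eventually_gt_at_top[of "0::real"]
    proof eventually_elim
      case (elim T)
      have e: "1 + 1 / (2*T) = (2*T + 1) / (2*T)" using elim by (simp add: add_divide_distrib)
      show ?case unfolding e using SZ_card_bounds[of T] elim by (intro divide_right_mono) auto
    qed
  qed
  have "((\<lambda>T. (real (card (SZ T)) / (2*T)) ^ CARD('n)) \<longlongrightarrow> 1 ^ CARD('n)) at_top"
    by (rule tendsto_power[OF r])
  moreover have "measure (count_space UNIV) (boxZ T :: (int^'n) set) / (2*T)^CARD('n) = (real (card (SZ T)) / (2*T)) ^ CARD('n)" for T
  proof -
    have "measure (count_space UNIV) (boxZ T :: (int^'n) set) = real (card (boxZ T :: (int^'n) set))"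
      by (simp add: measure_def emeasure_count_space_finite boxZ_fin)
    then show ?thesis by (simp add: boxZ_card power_divide)
  qed
  ultimately show ?thesis by simp
qed


theorem mainTheorem17:
  fixes M :: "'a measure" and X0 :: "'a \<Rightarrow> real"
  assumes "prob_space M" and "X0 \<in> borel_measurable M"
  shows
    "(\<forall>\<theta> :: int ^ 'n \<Rightarrow> 'a \<Rightarrow> 'a.
        mp_action M \<theta> \<and> measurable_field (count_space UNIV) M (field_of X0 \<theta>) \<and>
        associated M (field_of X0 \<theta>) \<longrightarrow>
        (ergodic_field (count_space UNIV) boxZ CARD('n) M \<theta> (field_of X0 \<theta>) \<longleftrightarrow>
         weakly_mixing_field (count_space UNIV) boxZ CARD('n) M \<theta> (field_of X0 \<theta>)))
   \<and> (\<forall>\<theta> :: real ^ 'n \<Rightarrow> 'a \<Rightarrow> 'a.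
        mp_action M \<theta> \<and> measurable_field lborel M (field_of X0 \<theta>) \<and>
        associated M (field_of X0 \<theta>) \<longrightarrow>
        (ergodic_field lborel boxR CARD('n) M \<theta> (field_of X0 \<theta>) \<longleftrightarrow>
         weakly_mixing_field lborel boxR CARD('n) M \<theta> (field_of X0 \<theta>)))"
proof (intro conjI allI impI)
  fix \<theta> :: "int ^ 'n \<Rightarrow> 'a \<Rightarrow> 'a"
  assume h: "mp_action M \<theta> \<and> measurable_field (count_space UNIV) M (field_of X0 \<theta>) \<and>
        associated M (field_of X0 \<theta>)"
  interpret mixsetup "count_space UNIV" boxZ "CARD('n)" M \<theta> X0
  proof (rule mixsetup.intro)
    show "emeasure (count_space UNIV) (boxZ T :: (int^'n) set) < \<infinity>" for T
      using boxZ_fin[of T, where 'n='n] by (simp add: of_nat_less_top)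
    show "((\<lambda>T. measure (count_space UNIV) (boxZ T :: (int^'n) set) / (2*T)^CARD('n)) \<longlongrightarrow> 1) at_top"
      by (rule boxZ_lim)
    show "(\<lambda>t. s - t) \<in> (count_space UNIV :: (int^'n) measure) \<rightarrow>\<^sub>M count_space UNIV" for s
      by (rule measurable_count_space)
    show "prob_space M" by (rule assms(1))
    show "X0 \<in> borel_measurable M" by (rule assms(2))
    show "mp_action M \<theta>" using h by blast
    show "measurable_field (count_space UNIV) M (field_of X0 \<theta>)" using h by blast
    show "associated M (field_of X0 \<theta>)" using h by blast
    show "space (count_space UNIV :: (int^'n) measure) = UNIV" by simp
    show "boxZ T \<in> sets (count_space UNIV :: (int^'n) measure)" for T by simp
  qed
  show "ergodic_field (count_space UNIV) boxZ CARD('n) M \<theta> (field_of X0 \<theta>) \<longleftrightarrow>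
         weakly_mixing_field (count_space UNIV) boxZ CARD('n) M \<theta> (field_of X0 \<theta>)"
    by (rule main_equiv)
next
  fix \<theta> :: "real ^ 'n \<Rightarrow> 'a \<Rightarrow> 'a"
  assume h: "mp_action M \<theta> \<and> measurable_field lborel M (field_of X0 \<theta>) \<and>
        associated M (field_of X0 \<theta>)"
  interpret mixsetup lborel boxR "CARD('n)" M \<theta> X0
  proof (rule mixsetup.intro)
    show "boxR T \<in> sets (lborel :: (real^'n) measure)" for T by (rule boxR_sets)
    show "emeasure lborel (boxR T :: (real^'n) set) < \<infinity>" for T by (rule boxR_fin)
    show "((\<lambda>T. measure lborel (boxR T :: (real^'n) set) / (2*T)^CARD('n)) \<longlongrightarrow> 1) at_top"
      by (rule boxR_lim)
    show "(\<lambda>t. s - t) \<in> (lborel :: (real^'n) measure) \<rightarrow>\<^sub>M lborel" for s by (rule minus_lborel)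
    show "prob_space M" by (rule assms(1))
    show "X0 \<in> borel_measurable M" by (rule assms(2))
    show "mp_action M \<theta>" using h by blast
    show "measurable_field lborel M (field_of X0 \<theta>)" using h by blast
    show "associated M (field_of X0 \<theta>)" using h by blast
    show "space (lborel :: (real^'n) measure) = UNIV" by simp
  qed
  show "ergodic_field lborel boxR CARD('n) M \<theta> (field_of X0 \<theta>) \<longleftrightarrow>
         weakly_mixing_field lborel boxR CARD('n) M \<theta> (field_of X0 \<theta>)"
    by (rule main_equiv)
qed

end
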